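(* Let $F$ be an infinite family of index sets linearly ordered by $\subseteq$ such that $I_1\subsetneq I_2$ in $F$ implies $I_2\setminus I_1$ is infinite. If $\langle F;\subseteq\rangle$ is densely ordered, then $|\overline{F}|\ge 2^{\omega}$.
   Context: A predicate symbol $R$ is non-empty for a theory $T$ if $T\vdash\exists\bar x R(\bar x)$, empty otherwise. A complete theory $T$ in a predicate language is language uniform (LU) if for each arity $m$, every permutation of the set of $m$-ary symbols non-empty for $T$ preserves $T$. Let $T_0$ be a complete LU-theory in a relational language $\Sigma_0$, let $n\ge1$, and let $\{R_k\mid k\in I_0\}$, $I_0$ infinite, be the set of $n$-ary symbols of $\Sigma_0$ that are non-empty for $T_0$. An index set is an infinite $I\subseteq I_0$ with $|I|=|I_0|$ and $|I_0\setminus I|$ equal to the number of $n$-ary symbols of $\Sigma_0$ that are empty for $T_0$. For infinite $F'\subseteq F$: $\bigcup F'$ is an (upper) accumulation point of $F'$ if $\bigcup F'\notin F'$, and $\bigcap F'$ is a (lower) accumulation point of $F'$ if $\bigcap F'\notin F'$. The closure $\overline{F}$ is the set consisting of the elements of $F$ together with all accumulation points of infinite subfamilies $F'\subseteq F$, ordered by $\subseteq$. *)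

theory Defs
  imports Main "HOL-Library.Equipollence"
begin

text \<open>Index sets relative to the infinite set I0 of indices of non-empty n-ary symbols
  and the set E of n-ary symbols that are empty for T0 (only its cardinality matters).\<close>
definition index_set :: "'k set \<Rightarrow> 'e set \<Rightarrow> 'k set \<Rightarrow> bool" where
  "index_set I0 E I \<longleftrightarrow> infinite I \<and> I \<subseteq> I0 \<and> I \<approx> I0 \<and> (I0 - I) \<approx> E"

definition upper_acc :: "'k set set \<Rightarrow> 'k set set" where
  "upper_acc F = {\<Union>F' | F'. F' \<subseteq> F \<and> infinite F' \<and> \<Union>F' \<notin> F'}"

definition lower_acc :: "'k set set \<Rightarrow> 'k set set" where
  "lower_acc F = {\<Inter>F' | F'. F' \<subseteq> F \<and> infinite F' \<and> \<Inter>F' \<notin> F'}"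

definition closureF :: "'k set set \<Rightarrow> 'k set set" where
  "closureF F = F \<union> upper_acc F \<union> lower_acc F"

end

theory Submission
  imports Defs
begin

definition mid :: "'k set set \<Rightarrow> 'k set \<Rightarrow> 'k set \<Rightarrow> 'k set" where
  "mid F a b = (SOME c. c \<in> F \<and> a \<subset> c \<and> c \<subset> b)"

primrec iv :: "'k set set \<Rightarrow> 'k set \<Rightarrow> 'k set \<Rightarrow> (nat \<Rightarrow> bool) \<Rightarrow> nat \<Rightarrow> 'k set \<times> 'k set" where
  "iv F A B x 0 = (A, B)"
| "iv F A B x (Suc n) = (if x n then (mid F (fst (iv F A B x n)) (snd (iv F A B x n)), snd (iv F A B x n))
      else (fst (iv F A B x n), mid F (fst (iv F A B x n)) (snd (iv F A B x n))))"

lemma mid_prop: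
  assumes "\<forall>A\<in>F. \<forall>B\<in>F. A \<subset> B \<longrightarrow> (\<exists>C\<in>F. A \<subset> C \<and> C \<subset> B)"
    and "a \<in> F" "b \<in> F" "a \<subset> b"
  shows "mid F a b \<in> F \<and> a \<subset> mid F a b \<and> mid F a b \<subset> b"
proof -
  have "\<exists>C\<in>F. a \<subset> C \<and> C \<subset> b" using assms(1)[rule_format, OF assms(2) assms(3) assms(4)] .
  then obtain c where "c \<in> F \<and> a \<subset> c \<and> c \<subset> b" by blast
  then have "(\<lambda>c. c \<in> F \<and> a \<subset> c \<and> c \<subset> b) (SOME c. c \<in> F \<and> a \<subset> c \<and> c \<subset> b)"
    by (rule someI[where P="\<lambda>c. c \<in> F \<and> a \<subset> c \<and> c \<subset> b"])
  then show ?thesis unfolding mid_def .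
qed

lemma iv_inv:
  assumes d: "\<forall>A\<in>F. \<forall>B\<in>F. A \<subset> B \<longrightarrow> (\<exists>C\<in>F. A \<subset> C \<and> C \<subset> B)"
    and "A \<in> F" "B \<in> F" "A \<subset> B"
  shows "fst (iv F A B x n) \<in> F \<and> snd (iv F A B x n) \<in> F \<and> fst (iv F A B x n) \<subset> snd (iv F A B x n)"
proof (induction n)
  case 0 then show ?case using assms by simp
next
  case (Suc n)
  have "mid F (fst (iv F A B x n)) (snd (iv F A B x n)) \<in> F \<and>
     fst (iv F A B x n) \<subset> mid F (fst (iv F A B x n)) (snd (iv F A B x n)) \<and>
     mid F (fst (iv F A B x n)) (snd (iv F A B x n)) \<subset> snd (iv F A B x n)"
    using mid_prop[OF d, of "fst (iv F A B x n)" "snd (iv F A B x n)"] Suc.IH by blast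
  then show ?case using Suc.IH by (cases "x n") simp_all
qed

lemma iv_step:
  assumes d: "\<forall>A\<in>F. \<forall>B\<in>F. A \<subset> B \<longrightarrow> (\<exists>C\<in>F. A \<subset> C \<and> C \<subset> B)"
    and "A \<in> F" "B \<in> F" "A \<subset> B"
  shows "fst (iv F A B x n) \<subseteq> fst (iv F A B x (Suc n)) \<and> snd (iv F A B x (Suc n)) \<subseteq> snd (iv F A B x n)
     \<and> (x n \<longrightarrow> fst (iv F A B x n) \<subset> fst (iv F A B x (Suc n)))"
proof -
  have "mid F (fst (iv F A B x n)) (snd (iv F A B x n)) \<in> F \<and>
     fst (iv F A B x n) \<subset> mid F (fst (iv F A B x n)) (snd (iv F A B x n)) \<and>
     mid F (fst (iv F A B x n)) (snd (iv F A B x n)) \<subset> snd (iv F A B x n)"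
    using mid_prop[OF d, of "fst (iv F A B x n)" "snd (iv F A B x n)"] iv_inv[OF assms, of x n] by blast
  then show ?thesis by (cases "x n") auto
qed

lemma iv_mono:
  assumes d: "\<forall>A\<in>F. \<forall>B\<in>F. A \<subset> B \<longrightarrow> (\<exists>C\<in>F. A \<subset> C \<and> C \<subset> B)"
    and "A \<in> F" "B \<in> F" "A \<subset> B" "n \<le> m"
  shows "fst (iv F A B x n) \<subseteq> fst (iv F A B x m) \<and> snd (iv F A B x m) \<subseteq> snd (iv F A B x n)"
  using assms(5)
proof (induction m rule: dec_induct)
  case base then show ?case by simp
next
  case (step m) then show ?case using iv_step[OF d assms(2-4), of x m] by blast
qed

lemma iv_fst_snd:
  assumes d: "\<forall>A\<in>F. \<forall>B\<in>F. A \<subset> B \<longrightarrow> (\<exists>C\<in>F. A \<subset> C \<and> C \<subset> B)"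
    and "A \<in> F" "B \<in> F" "A \<subset> B"
  shows "fst (iv F A B x n) \<subseteq> snd (iv F A B x m)"
proof -
  have "fst (iv F A B x n) \<subseteq> fst (iv F A B x (max n m))" using iv_mono[OF assms, of n "max n m"] by simp
  moreover have "fst (iv F A B x (max n m)) \<subseteq> snd (iv F A B x (max n m))" using iv_inv[OF assms] by blast
  moreover have "snd (iv F A B x (max n m)) \<subseteq> snd (iv F A B x m)" using iv_mono[OF assms, of m "max n m"] by simp
  ultimately show ?thesis by blast
qed

lemma iv_prefix: "(\<forall>i<n. x i = y i) \<Longrightarrow> iv F A B x n = iv F A B y n"
  by (induction n) auto

lemma finite_chain_Union:
  assumes "finite S" "S \<noteq> {}" "\<forall>a\<in>S. \<forall>b\<in>S. a \<subseteq> b \<or> b \<subseteq> a"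
  shows "\<Union>S \<in> S"
  using assms
proof (induction S rule: finite_ne_induct)
  case (singleton x) then show ?case by simp
next
  case (insert a S)
  then have u: "\<Union>S \<in> S" by blast
  then have "a \<subseteq> \<Union>S \<or> \<Union>S \<subseteq> a" using insert.prems by blast
  then show ?case using u by (auto simp: sup.absorb2 sup.absorb1)
qed

theorem proposition4p9:
  fixes I0 :: "'k set" and E :: "'e set" and F :: "'k set set"
  assumes "infinite I0"
    and "\<forall>I\<in>F. index_set I0 E I"
    and "infinite F"
    and "\<forall>A\<in>F. \<forall>B\<in>F. A \<subseteq> B \<or> B \<subseteq> A"
    and "\<forall>A\<in>F. \<forall>B\<in>F. A \<subset> B \<longrightarrow> infinite (B - A)"
    and "\<forall>A\<in>F. \<forall>B\<in>F. A \<subset> B \<longrightarrow> (\<exists>C\<in>F. A \<subset> C \<and> C \<subset> B)"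
  shows "Pow (UNIV :: nat set) \<lesssim> closureF F"
proof -
  note d = assms(6)
  obtain A B where AB: "A \<in> F" "B \<in> F" "A \<subset> B"
  proof -
    obtain A where "A \<in> F" using assms(3) infinite_imp_nonempty by blast
    moreover have "infinite (F - {A})" using assms(3) by simp
    then obtain B where "B \<in> F - {A}" using infinite_imp_nonempty by blast
    then have "B \<in> F" "B \<noteq> A" by auto
    ultimately show ?thesis using that assms(4) by blast
  qed
  define U where "U x = \<Union>(range (\<lambda>n. fst (iv F A B x n)))" for x
  define enc :: "nat set \<Rightarrow> nat \<Rightarrow> bool" where "enc S n = (if even n then n div 2 \<in> S else True)" for S n
  have inft: "\<exists>j\<ge>n. enc S j" for S n
    by (rule exI[of _ "2*n+1"]) (simp add: enc_def)
  have inv: "\<And>x n. fst (iv F A B x n) \<in> F \<and> snd (iv F A B x n) \<in> F \<and> fst (iv F A B x n) \<subset> snd (iv F A B x n)"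
    by (rule iv_inv[OF d AB])
  have step: "\<And>x n. fst (iv F A B x n) \<subseteq> fst (iv F A B x (Suc n)) \<and> snd (iv F A B x (Suc n)) \<subseteq> snd (iv F A B x n)
     \<and> (x n \<longrightarrow> fst (iv F A B x n) \<subset> fst (iv F A B x (Suc n)))"
    by (rule iv_step[OF d AB])
  have mono: "\<And>x n m. n \<le> m \<Longrightarrow> fst (iv F A B x n) \<subseteq> fst (iv F A B x m)"
    using iv_mono[OF d AB] by simp
  have fs: "\<And>x n m. fst (iv F A B x n) \<subseteq> snd (iv F A B x m)"
    by (rule iv_fst_snd[OF d AB])
  have inUA: "U x \<in> upper_acc F" if xi: "\<And>n. \<exists>j\<ge>n. x j" for x
  proof -
    define F' where "F' = range (\<lambda>n. fst (iv F A B x n))"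
    have sub: "F' \<subseteq> F" using inv unfolding F'_def by blast
    have notin: "\<Union>F' \<notin> F'"
    proof
      assume "\<Union>F' \<in> F'"
      then obtain n where n: "\<Union>F' = fst (iv F A B x n)" unfolding F'_def by blast
      obtain k where k: "k \<ge> n" "x k" using xi by blast
      have "fst (iv F A B x (Suc k)) \<subseteq> \<Union>F'" unfolding F'_def by blast
      also have "\<dots> \<subseteq> fst (iv F A B x k)" using n mono[OF k(1)] by simp
      finally show False using step[of x k] k(2) by blast
    qed
    have "infinite F'"
    proof
      assume "finite F'"
      moreover have "F' \<noteq> {}" unfolding F'_def by blast
      moreover have "\<forall>a\<in>F'. \<forall>b\<in>F'. a \<subseteq> b \<or> b \<subseteq> a" using sub assms(4) by blast
      ultimately have "\<Union>F' \<in> F'" by (rule finite_chain_Union)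
      with notin show False by blast
    qed
    then show ?thesis unfolding upper_acc_def U_def F'_def using sub notin F'_def by blast
  qed
  have Uinj: "U x \<noteq> U y" if H: "x \<noteq> y" "\<And>n. \<exists>j\<ge>n. x j" "\<And>n. \<exists>j\<ge>n. y j" for x y
  proof -
    have gen: "U a \<noteq> U b" if ab: "\<forall>i<k. a i = b i" "\<not> a k" "b k" and bi: "\<And>n. \<exists>j\<ge>n. b j" for a b k
    proof -
      have eq: "iv F A B a k = iv F A B b k" using iv_prefix ab(1) by blast
      define m where "m = mid F (fst (iv F A B a k)) (snd (iv F A B a k))"
      have sa: "snd (iv F A B a (Suc k)) = m" using ab(2) unfolding m_def by simp
      have fb: "fst (iv F A B b (Suc k)) = m" using ab(3) eq unfolding m_def by simp
      have "U a \<subseteq> m" unfolding U_def using fs[of a _ "Suc k"] sa by blast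
      moreover obtain j where j: "j \<ge> Suc k" "b j" using bi by blast
      have "m \<subset> fst (iv F A B b (Suc j))" using mono[OF j(1), of b] fb step[of b j] j(2) by blast
      moreover have "fst (iv F A B b (Suc j)) \<subseteq> U b" unfolding U_def by blast
      ultimately show ?thesis by blast
    qed
    obtain i where "x i \<noteq> y i" using H(1) by blast
    define k where "k = (LEAST i. x i \<noteq> y i)"
    have k1: "x k \<noteq> y k" unfolding k_def by (rule LeastI) fact
    have k2: "\<forall>i<k. x i = y i" unfolding k_def using not_less_Least by blast
    show ?thesis
    proof (cases "x k")
      case True
      then have "\<not> y k" using k1 by simp
      then show ?thesis using gen[of k y x] k2 True H(2) by metis
    next
      case False
      then have "y k" using k1 by simp
      then show ?thesis using gen[of k x y] k2 False H(3) by metis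
    qed
  qed
  have encinj: "inj enc"
  proof (rule injI)
    fix S T assume "enc S = enc T"
    then have "\<And>n. enc S (2*n) = enc T (2*n)" by simp
    then show "S = T" by (auto simp: enc_def)
  qed
  show ?thesis
    unfolding lepoll_def
  proof (intro exI conjI)
    show "inj_on (U \<circ> enc) (Pow UNIV)"
    proof (rule inj_onI)
      fix S T assume "(U \<circ> enc) S = (U \<circ> enc) T" "S \<in> Pow UNIV" "T \<in> Pow UNIV"
      then have "U (enc S) = U (enc T)" by simp
      then have "enc S = enc T" using Uinj[of "enc S" "enc T"] inft by blast
      then show "S = T" using encinj by (simp add: inj_eq)
    qed
    show "(U \<circ> enc) ` Pow UNIV \<subseteq> closureF F"
      unfolding closureF_def using inUA inft by auto
  qed
qed

end
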